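(* Let $S$ be a MANS-semigroup with $\mathrm{msg}(S)=\{n_1<n_2<\cdots<n_e<n_{e+1}\}$, where $e\geq 2$. Then for every $i\in\{2,\ldots,e\}$, $S'=\langle n_1,n_2,\ldots,n_i\rangle$ is a MANS-semigroup with $\mathrm{e}(S')=i$.
   Context: $\mathbb{N}=\{0,1,2,\ldots\}$. A numerical semigroup is a subset $S\subseteq\mathbb{N}$ closed under addition, containing $0$, with $\mathbb{N}\setminus S$ finite; $\langle A\rangle$ is the submonoid generated by $A$; $\mathrm{msg}(S)$ is the unique finite minimal system of generators and $\mathrm{e}(S)=|\mathrm{msg}(S)|$. $S$ is a MANS-semigroup if $w(1)<\cdots<w(\mathrm{m}(S)-1)$, where $\mathrm{m}(S)$ is the least element of $S\setminus\{0\}$ and $w(i)$ the least element of $S$ congruent to $i$ modulo $\mathrm{m}(S)$. *)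

theory Defs
  imports Main
begin

definition numerical_semigroup :: "nat set \<Rightarrow> bool" where
  "numerical_semigroup S \<longleftrightarrow> 0 \<in> S \<and> (\<forall>x\<in>S. \<forall>y\<in>S. x + y \<in> S) \<and> finite (UNIV - S)"

inductive_set gen :: "nat set \<Rightarrow> nat set" for A :: "nat set" where
  gen_zero: "0 \<in> gen A"
| gen_add: "a \<in> A \<Longrightarrow> x \<in> gen A \<Longrightarrow> a + x \<in> gen A"

definition is_msg :: "nat set \<Rightarrow> nat set \<Rightarrow> bool" where
  "is_msg A S \<longleftrightarrow> gen A = S \<and> (\<forall>B. B \<subset> A \<longrightarrow> gen B \<noteq> S)"

definition msg :: "nat set \<Rightarrow> nat set" where
  "msg S = (THE A. is_msg A S)"

definition embdim :: "nat set \<Rightarrow> nat" where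
  "embdim S = card (msg S)"

definition multiplicity :: "nat set \<Rightarrow> nat" where
  "multiplicity S = (LEAST x. x \<in> S \<and> x \<noteq> 0)"

definition apery_w :: "nat set \<Rightarrow> nat \<Rightarrow> nat" where
  "apery_w S i = (LEAST x. x \<in> S \<and> x mod multiplicity S = i)"

definition MANS :: "nat set \<Rightarrow> bool" where
  "MANS S \<longleftrightarrow> numerical_semigroup S \<and>
     (\<forall>i j. 1 \<le> i \<longrightarrow> i < j \<longrightarrow> j < multiplicity S \<longrightarrow> apery_w S i < apery_w S j)"

end

theory Submission
  imports Defs
begin

lemma gen_base: "a \<in> A \<Longrightarrow> a \<in> gen A"
  using gen.gen_add[of a A 0] gen.gen_zero by simp

lemma gen_addc: "x \<in> gen A \<Longrightarrow> y \<in> gen A \<Longrightarrow> x + y \<in> gen A"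
  by (induction x rule: gen.induct) (auto simp: add.assoc intro: gen.gen_add)

lemma gen_mult: "a \<in> A \<Longrightarrow> k * a \<in> gen A"
  by (induction k) (auto intro: gen.gen_zero gen_addc gen_base)

lemma gen_subset:
  assumes "A \<subseteq> S" "0 \<in> S" "\<forall>x\<in>S. \<forall>y\<in>S. x + y \<in> S"
  shows "gen A \<subseteq> S"
proof
  fix x assume "x \<in> gen A" then show "x \<in> S"
    by (induction x rule: gen.induct) (use assms in auto)
qed

lemma gen_mono: assumes "A \<subseteq> B" shows "gen A \<subseteq> gen B"
proof
  fix x assume "x \<in> gen A" then show "x \<in> gen B" using assms
    by (induction x rule: gen.induct) (auto intro: gen.intros)
qed

lemma gen_restrict:
  assumes "x \<in> gen B" "\<forall>b\<in>B. b < c \<longrightarrow> b \<in> A" "x < c"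
  shows "x \<in> gen A"
  using assms by (induction x rule: gen.induct) (auto intro: gen.intros)

lemma gen_nonzero_ge:
  assumes "y \<in> gen B" "y \<noteq> 0"
  shows "\<exists>b\<in>B. b \<le> y"
  using assms(1)
proof (cases rule: gen.cases)
  case (gen_add a x) then show ?thesis by (intro bexI[of _ a]) auto
qed (use assms in simp)

definition irr :: "nat set \<Rightarrow> nat set" where
  "irr S = {x\<in>S. x \<noteq> 0 \<and> \<not>(\<exists>s t. s\<in>S \<and> t\<in>S \<and> s\<noteq>0 \<and> t\<noteq>0 \<and> x = s+t)}"

lemma gen_irr:
  assumes "0 \<in> S" "\<forall>x\<in>S. \<forall>y\<in>S. x + y \<in> S"
  shows "gen (irr S) = S"
proof
  show "gen (irr S) \<subseteq> S" using gen_subset[of "irr S" S] assms by (auto simp: irr_def)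
  show "S \<subseteq> gen (irr S)"
  proof
    fix x assume "x \<in> S" then show "x \<in> gen (irr S)"
    proof (induction x rule: less_induct)
      case (less x)
      show ?case
      proof (cases "x \<in> irr S \<or> x = 0")
        case True then show ?thesis by (auto intro: gen_base gen.gen_zero)
      next
        case False
        then obtain s t where "s\<in>S" "t\<in>S" "s\<noteq>0" "t\<noteq>0" "x = s+t"
          using less.prems by (auto simp: irr_def)
        then show ?thesis using less.IH[of s] less.IH[of t] by (auto intro: gen_addc)
      qed
    qed
  qed
qed

lemma is_msg_irr:
  assumes "0 \<in> S" "\<forall>x\<in>S. \<forall>y\<in>S. x + y \<in> S"
  shows "is_msg (irr S) S"
  unfolding is_msg_def
proof (intro conjI allI impI)
  show "gen (irr S) = S" using gen_irr assms .
  fix B assume B: "B \<subset> irr S"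
  then obtain a where a: "a \<in> irr S" "a \<notin> B" by blast
  show "gen B \<noteq> S"
  proof
    assume "gen B = S"
    then have "a \<in> gen B" using a by (auto simp: irr_def)
    then show False
    proof (cases rule: gen.cases)
      case (gen_add b x)
      have "x \<in> S" using gen_mono[of B "irr S"] B gen_irr[OF assms] gen_add by auto
      moreover have "b \<in> S" "b \<noteq> 0" using B gen_add by (auto simp: irr_def)
      moreover have "x \<noteq> 0" using a gen_add by (metis add.right_neutral)
      ultimately show False using a gen_add unfolding irr_def by blast
    qed (use a in \<open>auto simp: irr_def\<close>)
  qed
qed

lemma gen_remove_zero: "gen A \<subseteq> gen (A - {0})"
proof
  fix x assume "x \<in> gen A" then show "x \<in> gen (A - {0})"
    by (induction x rule: gen.induct) (auto intro: gen.intros, metis Diff_iff add_0 singletonD gen.gen_add)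
qed

lemma gen_below: "x \<in> gen A \<Longrightarrow> x < a \<Longrightarrow> x \<in> gen (A - {a})"
  by (induction x rule: gen.induct) (auto intro: gen.intros)

lemma gen_absorb:
  assumes "a \<in> gen (A - {a})"
  shows "gen A \<subseteq> gen (A - {a})"
proof
  fix x assume "x \<in> gen A" then show "x \<in> gen (A - {a})"
    by (induction x rule: gen.induct) (auto intro: gen.intros gen_addc assms)
qed

lemma is_msg_unique:
  assumes "0 \<in> S" "\<forall>x\<in>S. \<forall>y\<in>S. x + y \<in> S" "is_msg A S"
  shows "A = irr S"
proof -
  have gA: "gen A = S" and minA: "\<And>B. B \<subset> A \<Longrightarrow> gen B \<noteq> S"
    using assms(3) by (auto simp: is_msg_def)
  have z: "0 \<notin> A"
  proof
    assume "0 \<in> A"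
    then have "A - {0} \<subset> A" by blast
    moreover have "gen (A - {0}) = S"
      using gen_remove_zero[of A] gen_mono[of "A - {0}" A] gA by auto
    ultimately show False using minA by blast
  qed
  show ?thesis
  proof
    show "A \<subseteq> irr S"
    proof
      fix a assume aA: "a \<in> A"
      have aS: "a \<in> S" using gA gen_base[OF aA] by auto
      have "a \<noteq> 0" proof assume "a = 0" with z aA show False by simp qed
      moreover have "\<not>(\<exists>s t. s\<in>S \<and> t\<in>S \<and> s\<noteq>0 \<and> t\<noteq>0 \<and> a = s+t)"
      proof
        assume "\<exists>s t. s\<in>S \<and> t\<in>S \<and> s\<noteq>0 \<and> t\<noteq>0 \<and> a = s+t"
        then obtain s t where st: "s\<in>S" "t\<in>S" "s\<noteq>0" "t\<noteq>0" "a = s+t" by blast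
        have "s \<in> gen (A - {a})" "t \<in> gen (A - {a})"
          using gen_below[of s A a] gen_below[of t A a] st gA by auto
        then have "a \<in> gen (A - {a})" using st gen_addc by auto
        then have "gen (A - {a}) = S"
          using gen_absorb[of a A] gen_mono[of "A - {a}" A] gA by auto
        moreover have "A - {a} \<subset> A" using aA by blast
        ultimately show False using minA by blast
      qed
      ultimately show "a \<in> irr S" using aS by (auto simp: irr_def)
    qed
    show "irr S \<subseteq> A"
    proof
      fix x assume x: "x \<in> irr S"
      then have "x \<in> gen A" using gA by (auto simp: irr_def)
      then show "x \<in> A"
      proof (cases rule: gen.cases)
        case (gen_add b y)
        have "y \<in> S" "b \<in> S" using gen_add gA gen_base by auto
        then have "y = 0" using x gen_add z by (auto simp: irr_def)
        then show ?thesis using gen_add by simp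
      qed (use x in \<open>auto simp: irr_def\<close>)
    qed
  qed
qed

lemma msg_eq_irr:
  assumes "0 \<in> S" "\<forall>x\<in>S. \<forall>y\<in>S. x + y \<in> S"
  shows "msg S = irr S"
  unfolding msg_def
  using is_msg_irr[OF assms] is_msg_unique[OF assms] by (intro the_equality) blast+

lemma chain_mono:
  fixes f :: "nat \<Rightarrow> nat"
  assumes "\<And>k. 1 \<le> k \<Longrightarrow> k + 1 < m \<Longrightarrow> f k < f (k+1)"
  shows "1 \<le> i \<Longrightarrow> i < j \<Longrightarrow> j < m \<Longrightarrow> f i < f j"
proof (induction j)
  case 0 then show ?case by simp
next
  case (Suc j)
  show ?case
  proof (cases "i = j")
    case True then show ?thesis using assms Suc.prems by simp
  next
    case False
    then have "f i < f j" using Suc by simp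
    also have "f j < f (Suc j)" using assms[of j] Suc.prems False by simp
    finally show ?thesis .
  qed
qed

lemma ns_residue:
  assumes "numerical_semigroup S" "(m::nat) > 0" "r < m"
  shows "\<exists>x\<in>S. x mod m = r"
proof -
  have "finite (UNIV - S)" using assms(1) by (simp add: numerical_semigroup_def)
  then obtain K where K: "\<forall>n\<in>UNIV - S. n < K" by (auto simp: finite_nat_set_iff_bounded)
  have "K \<le> r + m * K" using assms(2) by (simp add: trans_le_add2)
  have "r + m * K \<in> S"
  proof (rule ccontr)
    assume "r + m * K \<notin> S"
    then have "r + m * K < K" using K by blast
    with \<open>K \<le> r + m * K\<close> show False by simp
  qed
  moreover have "(r + m * K) mod m = r" using assms by simp
  ultimately show ?thesis by blast
qed

lemma least_props:
  assumes "\<exists>x\<in>S. x mod (m::nat) = r"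
  shows "(LEAST x. x\<in>S \<and> x mod m = r) \<in> S"
    "(LEAST x. x\<in>S \<and> x mod m = r) mod m = r"
    "\<And>y. y \<in> S \<Longrightarrow> y mod m = r \<Longrightarrow> (LEAST x. x\<in>S \<and> x mod m = r) \<le> y"
proof -
  from assms obtain x where "x\<in>S \<and> x mod m = r" by blast
  then have "(LEAST x. x\<in>S \<and> x mod m = r)\<in>S \<and> (LEAST x. x\<in>S \<and> x mod m = r) mod m = r"
    by (rule LeastI)
  then show "(LEAST x. x\<in>S \<and> x mod m = r) \<in> S" "(LEAST x. x\<in>S \<and> x mod m = r) mod m = r" by auto
  fix y assume "y \<in> S" "y mod m = r" then show "(LEAST x. x\<in>S \<and> x mod m = r) \<le> y"
    by (intro Least_le) auto
qed

lemma gen_single_mod: "x \<in> gen {a} \<Longrightarrow> x mod a = 0"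
  by (induction x rule: gen.induct) auto

theorem corollary4p3:
  fixes S :: "nat set" and n :: "nat \<Rightarrow> nat" and e :: nat
  assumes "MANS S"
    and "e \<ge> 2"
    and "strict_mono_on {1..e+1} n"
    and "msg S = n ` {1..e+1}"
  shows "\<forall>i\<in>{2..e}. MANS (gen (n ` {1..i})) \<and> embdim (gen (n ` {1..i})) = i"
  unfolding Ball_def
proof (intro allI impI)
  fix i assume i: "i \<in> {2..e}"
  define G where "G = n ` {1..e+1}"
  define A where "A = n ` {1..i}"
  define T where "T = gen A"
  define m where "m = n 1"
  have ns: "numerical_semigroup S" using assms(1) by (simp add: MANS_def)
  have z0: "0 \<in> S" and cl: "\<forall>x\<in>S. \<forall>y\<in>S. x + y \<in> S"
    using ns by (auto simp: numerical_semigroup_def)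
  have irrS: "irr S = G" using msg_eq_irr[OF z0 cl] assms(4) G_def by simp
  have genG: "gen G = S" using gen_irr[OF z0 cl] irrS by simp
  have G0: "0 \<notin> G" using irrS by (auto simp: irr_def)
  have lt: "\<And>j k. j \<in> {1..e+1} \<Longrightarrow> k \<in> {1..e+1} \<Longrightarrow> j < k \<Longrightarrow> n j < n k"
    using assms(3) strict_mono_onD by blast
  have le: "\<And>j k. j \<in> {1..e+1} \<Longrightarrow> k \<in> {1..e+1} \<Longrightarrow> j \<le> k \<Longrightarrow> n j \<le> n k"
    using lt by (metis le_eq_less_or_eq less_imp_le)
  have key: "\<And>s k. s \<in> S \<Longrightarrow> 1 \<le> k \<Longrightarrow> k \<le> e \<Longrightarrow> s < n (k+1) \<Longrightarrow> s \<in> gen (n ` {1..k})"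
  proof -
    fix s k assume s: "s \<in> S" "1 \<le> k" "k \<le> e" "s < n (k+1)"
    have "\<forall>b\<in>G. b < n (k+1) \<longrightarrow> b \<in> n ` {1..k}"
    proof (intro ballI impI)
      fix b assume "b \<in> G" "b < n (k+1)"
      then obtain j where j: "j \<in> {1..e+1}" "b = n j" using G_def by auto
      have "j \<le> k"
      proof (rule ccontr)
        assume "\<not> j \<le> k"
        then have "n (k+1) \<le> n j" using le[of "k+1" j] j s by auto
        then show False using \<open>b < n (k+1)\<close> j by simp
      qed
      then show "b \<in> n ` {1..k}" using j by auto
    qed
    then show "s \<in> gen (n ` {1..k})" using gen_restrict[of s G "n (k+1)"] s genG by auto
  qed
  have n1G: "n 1 \<in> G" and n2G: "n 2 \<in> G" using G_def assms(2) by auto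
  have n1S: "n 1 \<in> S" using gen_base[OF n1G] genG by simp
  have mpos: "m > 0" using G0 n1G m_def by (cases "n 1") auto
  have minS: "\<And>y. y \<in> S \<Longrightarrow> y \<noteq> 0 \<Longrightarrow> m \<le> y"
  proof -
    fix y assume "y \<in> S" "y \<noteq> 0"
    then obtain b where "b \<in> G" "b \<le> y" using gen_nonzero_ge[of y G] genG by auto
    then show "m \<le> y" using le[of 1] m_def G_def by fastforce
  qed
  have multS: "multiplicity S = m"
    unfolding multiplicity_def
    by (rule Least_equality) (use n1S mpos m_def minS in auto)
  have n2irr: "n 2 \<in> irr S" using irrS n2G by simp
  have m_lt_n2: "m < n 2" using lt[of 1 2] assms(2) m_def by auto
  have r0: "n 2 mod m \<noteq> 0"
  proof
    assume h: "n 2 mod m = 0"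
    then obtain q where q: "n 2 = m * q" by blast
    have "q \<noteq> 0" "q \<noteq> 1" using q m_lt_n2 by auto
    then have "q \<ge> 2" by arith
    have "(q - 1) * n 1 \<in> S" using gen_mult[OF n1G] genG by simp
    then have "m * (q - 1) \<in> S" using m_def by (simp add: mult.commute)
    moreover have "n 2 = m + m * (q - 1)" using q \<open>q \<ge> 2\<close> by (cases q) auto
    moreover have "m * (q - 1) \<noteq> 0" using mpos \<open>q \<ge> 2\<close> by simp
    ultimately show False using n2irr n1S m_def mpos unfolding irr_def by blast
  qed
  then have m2: "m \<ge> 2" using mpos by (cases "m = 1") auto
  have res: "\<And>r. r < m \<Longrightarrow> \<exists>x\<in>S. x mod m = r" using ns_residue[OF ns mpos] by blast
  have wS: "\<And>r. apery_w S r = (LEAST x. x\<in>S \<and> x mod m = r)" by (simp add: apery_w_def multS)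
  have n2mod: "n 2 mod m = 1"
  proof (rule ccontr)
    assume "n 2 mod m \<noteq> 1"
    then have r2: "2 \<le> n 2 mod m" using r0 by linarith
    have rm: "n 2 mod m < m" using mpos by simp
    have "apery_w S 1 < apery_w S (n 2 mod m)"
      using assms(1) r2 rm multS unfolding MANS_def by auto
    also have "\<dots> \<le> n 2" unfolding wS using least_props(3)[OF res[OF rm]] gen_base[OF n2G] genG by auto
    finally have "apery_w S 1 < n 2" .
    moreover have "apery_w S 1 \<in> S" "apery_w S 1 mod m = 1"
      unfolding wS using least_props[OF res[of 1]] m2 by auto
    ultimately have "apery_w S 1 \<in> gen (n ` {1..1})" using key[of "apery_w S 1" 1] assms(2) by (auto simp: numeral_2_eq_2)
    then have "apery_w S 1 mod n 1 = 0" using gen_single_mod by simp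
    then show False using \<open>apery_w S 1 mod m = 1\<close> m_def by simp
  qed
  have ie: "2 \<le> i" "i \<le> e" using i by auto
  have AG: "A \<subseteq> G" using ie A_def G_def by auto
  have TS: "T \<subseteq> S" using gen_mono[OF AG] genG T_def by auto
  have n1A: "n 1 \<in> A" and n2A: "n 2 \<in> A" using ie A_def by auto
  have z0T: "0 \<in> T" using T_def gen.gen_zero by simp
  have clT: "\<forall>x\<in>T. \<forall>y\<in>T. x + y \<in> T" using T_def gen_addc by auto
  have n2T: "\<And>r. r * n 2 \<in> T" using gen_mult[OF n2A] T_def by simp
  have n2m: "\<And>r. r < m \<Longrightarrow> (r * n 2) mod m = r"
    by (metis mod_mult_right_eq n2mod mult_1_right mod_less)
  have big: "\<And>x. (m - 1) * n 2 \<le> x \<Longrightarrow> x \<in> T"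
  proof -
    fix x assume x: "(m - 1) * n 2 \<le> x"
    define r where "r = x mod m"
    have rm: "r < m" using mpos r_def by simp
    have "r * n 2 \<le> (m - 1) * n 2" using rm by (intro mult_le_mono1) simp
    then have rx: "r * n 2 \<le> x" using x by (rule le_trans)
    have "x mod m = (r * n 2) mod m" using n2m[OF rm] r_def by simp
    then have "m dvd x - r * n 2" using mod_eq_dvd_iff_nat[OF rx] by simp
    then obtain k where "x - r * n 2 = m * k" by (elim dvdE)
    then have k: "x - r * n 2 = k * n 1" using m_def by (simp add: mult.commute)
    have "k * n 1 \<in> T" using gen_mult[OF n1A] T_def by simp
    then have "r * n 2 + k * n 1 \<in> T" using clT n2T by auto
    moreover have "x = r * n 2 + k * n 1" using k rx by simp
    ultimately show "x \<in> T" by simp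
  qed
  have "UNIV - T \<subseteq> {..<(m - 1) * n 2}" using big not_le by blast
  then have finT: "finite (UNIV - T)" by (rule finite_subset) simp
  have nsT: "numerical_semigroup T" using z0T clT finT by (simp add: numerical_semigroup_def)
  have n1T: "n 1 \<in> T" using gen_base[OF n1A] T_def by simp
  have multT: "multiplicity T = m"
    unfolding multiplicity_def
    by (rule Least_equality) (use n1T mpos m_def minS TS in auto)
  have resT: "\<And>r. r < m \<Longrightarrow> \<exists>x\<in>T. x mod m = r" using n2T n2m by blast
  have wT: "\<And>r. apery_w T r = (LEAST x. x\<in>T \<and> x mod m = r)" by (simp add: apery_w_def multT)
  have step: "\<And>k. 1 \<le> k \<Longrightarrow> k + 1 < m \<Longrightarrow> apery_w T k < apery_w T (k+1)"
  proof -
    fix k assume k: "1 \<le> k" "k + 1 < m"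
    define x where "x = apery_w T (k+1)"
    have xT: "x \<in> T" and xm: "x mod m = k + 1"
      and xmin: "\<And>y. y \<in> T \<Longrightarrow> y mod m = k + 1 \<Longrightarrow> x \<le> y"
      using least_props[OF resT[OF k(2)]] x_def wT by auto
    have "x \<in> gen A" using xT T_def by simp
    then obtain g x' where gx: "x = g + x'" "g \<in> A" "x' \<in> T"
    proof (cases rule: gen.cases)
      case gen_zero then show ?thesis using xm by simp
    next
      case (gen_add a y) then show ?thesis using that T_def by blast
    qed
    have g0: "g \<noteq> 0" using gx(2) AG G0 by (metis subsetD)
    have gm: "g mod m \<noteq> 0"
    proof
      assume "g mod m = 0"
      then have "x' mod m = k + 1" using xm gx by (metis add_0 mod_add_left_eq)
      then have "x \<le> x'" using xmin[OF gx(3)] by simp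
      then show False using gx(1) g0 by simp
    qed
    obtain z where z: "z \<in> S" "z < g" "Suc z mod m = g mod m"
    proof (cases "g mod m = 1")
      case True then show ?thesis using that[of 0] z0 g0 m2 by simp
    next
      case False
      then have r2: "2 \<le> g mod m" using gm by linarith
      have rm: "g mod m < m" using mpos by simp
      have rm1: "g mod m - 1 < m" using rm by simp
      define z where "z = apery_w S (g mod m - 1)"
      have "z < apery_w S (g mod m)"
        using assms(1) r2 rm multS unfolding MANS_def z_def by auto
      also have "\<dots> \<le> g" unfolding wS using least_props(3)[OF res[OF rm]] gx AG genG gen_base by blast
      finally have "z < g" .
      moreover have "z \<in> S" "z mod m = g mod m - 1"
        unfolding z_def wS using least_props[OF res[OF rm1]] by auto
      moreover have "Suc z mod m = g mod m" using calculation(3) r2 rm by (simp add: mod_Suc)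
      ultimately show ?thesis using that by blast
    qed
    obtain j where j: "j \<in> {1..i}" "g = n j" using gx A_def by auto
    have "g \<le> n i" using le[of j i] j ie by auto
    also have "n i < n (i+1)" using lt[of i "i+1"] ie by auto
    finally have "z \<in> T" using key[of z i] z ie T_def A_def by auto
    define y where "y = z + x'"
    have yT: "y \<in> T" using clT \<open>z \<in> T\<close> gx y_def by auto
    have yx: "y < x" using y_def gx z by simp
    have "Suc y mod m = (Suc z + x') mod m" using y_def by simp
    also have "\<dots> = (Suc z mod m + x') mod m" by (simp add: mod_add_left_eq)
    also have "\<dots> = (g mod m + x') mod m" using z by simp
    also have "\<dots> = x mod m" using gx by (simp add: mod_add_left_eq)
    finally have "Suc y mod m = k + 1" using xm by simp
    then have ym: "y mod m = k" by (simp add: mod_Suc split: if_splits)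
    have "apery_w T k \<le> y" unfolding wT using least_props(3)[OF resT] yT ym k by auto
    then show "apery_w T k < apery_w T (k+1)" using yx x_def by simp
  qed
  have "MANS T"
    unfolding MANS_def using nsT multT chain_mono[of m "apery_w T", OF step] by auto
  moreover have "irr T = A"
  proof
    show "irr T \<subseteq> A"
    proof
      fix x assume x: "x \<in> irr T"
      then have "x \<in> gen A" using T_def by (auto simp: irr_def)
      then show "x \<in> A"
      proof (cases rule: gen.cases)
        case (gen_add b y)
        have "y \<in> T" "b \<in> T" using gen_add T_def gen_base by auto
        moreover have "b \<noteq> 0" using gen_add(2) AG G0 by (metis subsetD)
        ultimately have "y = 0" using x gen_add unfolding irr_def by blast
        then show ?thesis using gen_add by simp
      qed (use x in \<open>auto simp: irr_def\<close>)
    qed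
    show "A \<subseteq> irr T"
    proof
      fix a assume a: "a \<in> A"
      then have "a \<in> irr S" using AG irrS by auto
      moreover have "a \<in> T" using gen_base[OF a] T_def by simp
      ultimately show "a \<in> irr T" using TS unfolding irr_def by blast
    qed
  qed
  moreover have "inj_on n {1..i}"
  proof (rule inj_onI)
    fix j k assume jk: "j \<in> {1..i}" "k \<in> {1..i}" "n j = n k"
    show "j = k"
    proof (rule ccontr)
      assume "j \<noteq> k"
      then have "j < k \<or> k < j" by arith
      then show False using lt[of j k] lt[of k j] jk ie by auto
    qed
  qed
  ultimately show "MANS T \<and> embdim T = i"
    using msg_eq_irr[OF z0T clT] A_def by (simp add: embdim_def card_image)
qed

end
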